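(* Let $\mathbf A=(A,\wedge,\vee,\cdot,\backslash,/,1)$ be an $r\ell u$-groupoid and let $(A^\star,\le^\star,\cdot^\star,1^\star)$ be constructed from it as described in the context. Then: (1) $(A^\star,\le^\star,\cdot^\star,1^\star)$ is a lattice-ordered unital groupoid, i.e. $\le^\star$ is a lattice order, $1^\star$ is a two-sided unit for $\cdot^\star$, and $x\le^\star y$ implies $x\cdot^\star z\le^\star y\cdot^\star z$ and $z\cdot^\star x\le^\star z\cdot^\star y$; (2) for all $x,y,z\in A^\star$: $x\cdot^\star y\le^\star z$ iff ${\sim}z\cdot^\star x\le^\star{\sim}y$ iff $y\cdot^\star{\sim}z\le^\star{\sim}x$.
   Context: An $r\ell u$-groupoid is an algebra $(A,\wedge,\vee,\cdot,\backslash,/,1)$ with $(A,\wedge,\vee)$ a lattice (order $\le$), $(A,\cdot,1)$ a unital groupoid (not necessarily associative), and $x\cdot y\le z\iff y\le x\backslash z\iff x\le z/y$. Construction: $A^\star=A\cup A^\sim\cup\{\top,\bot\}$, where $A^\sim=\{x^\sim\mid x\in A\}$ is a disjoint bijective copy of $A$ and $\top,\bot$ are two new elements. Multiplication: for $x,y\in A$ and $z\in A^\star$: $x\cdot^\star y=x\cdot y$; $x\cdot^\star y^\sim=(y/x)^\sim$; $x^\sim\cdot^\star y=(y\backslash x)^\sim$; $x^\sim\cdot^\star y^\sim=\top$; $z\cdot^\star\top=\top\cdot^\star z=\top$ if $z\neq\bot$ and $=\bot$ if $z=\bot$; $z\cdot^\star\bot=\bot\cdot^\star z=\bot$. Order $\le^\star$: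 extends $\le$ on $A$; $\bot<^\star x<^\star y^\sim<^\star\top$ for all $x,y\in A$; $x^\sim\le^\star y^\sim$ iff $y\le x$. $1^\star=1$. The map ${\sim}$ on $A^\star$: ${\sim}x=x^\sim$ for $x\in A$; ${\sim}(y^\sim)=y$ for $y\in A$; ${\sim}\top=\bot$; ${\sim}\bot=\top$. *)

theory Defs
  imports Main
begin

text \<open>An rlu-groupoid: the lattice (A, inf, sup) is the type class lattice on 'a
(order \<le>); mult is a unital (not necessarily associative) groupoid with unit one,
ldiv x z = x \ z and rdiv z y = z / y are the residuals.\<close>

definition rlu_groupoid ::
  "('a::lattice \<Rightarrow> 'a \<Rightarrow> 'a) \<Rightarrow> ('a \<Rightarrow> 'a \<Rightarrow> 'a) \<Rightarrow> ('a \<Rightarrow> 'a \<Rightarrow> 'a) \<Rightarrow> 'a \<Rightarrow> bool" where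
  "rlu_groupoid mult ldiv rdiv one \<longleftrightarrow>
     (\<forall>x. mult one x = x \<and> mult x one = x) \<and>
     (\<forall>x y z. (mult x y \<le> z \<longleftrightarrow> y \<le> ldiv x z) \<and> (mult x y \<le> z \<longleftrightarrow> x \<le> rdiv z y))"

text \<open>The carrier A* = A \<union> A~ \<union> {top, bot}.\<close>
datatype 'a star = Elem 'a | Tld 'a | STop | SBot

fun star_le :: "'a::lattice star \<Rightarrow> 'a star \<Rightarrow> bool" where
  "star_le SBot _ = True"
| "star_le _ STop = True"
| "star_le (Elem x) (Elem y) = (x \<le> y)"
| "star_le (Elem x) (Tld y) = True"
| "star_le (Tld x) (Tld y) = (y \<le> x)"
| "star_le _ _ = False"

fun star_mult :: "('a \<Rightarrow> 'a \<Rightarrow> 'a) \<Rightarrow> ('a \<Rightarrow> 'a \<Rightarrow> 'a) \<Rightarrow> ('a \<Rightarrow> 'a \<Rightarrow> 'a)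
                  \<Rightarrow> 'a star \<Rightarrow> 'a star \<Rightarrow> 'a star" where
  "star_mult mult ldiv rdiv SBot _ = SBot"
| "star_mult mult ldiv rdiv _ SBot = SBot"
| "star_mult mult ldiv rdiv STop _ = STop"
| "star_mult mult ldiv rdiv _ STop = STop"
| "star_mult mult ldiv rdiv (Elem x) (Elem y) = Elem (mult x y)"
| "star_mult mult ldiv rdiv (Elem x) (Tld y) = Tld (rdiv y x)"
| "star_mult mult ldiv rdiv (Tld x) (Elem y) = Tld (ldiv y x)"
| "star_mult mult ldiv rdiv (Tld x) (Tld y) = STop"

definition star_one :: "'a \<Rightarrow> 'a star" where
  "star_one one = Elem one"

fun star_neg :: "'a star \<Rightarrow> 'a star" where
  "star_neg (Elem x) = Tld x"
| "star_neg (Tld y) = Elem y"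
| "star_neg STop = SBot"
| "star_neg SBot = STop"

definition is_lattice_order :: "('b \<Rightarrow> 'b \<Rightarrow> bool) \<Rightarrow> bool" where
  "is_lattice_order le \<longleftrightarrow>
     (\<forall>x. le x x) \<and> (\<forall>x y. le x y \<and> le y x \<longrightarrow> x = y) \<and>
     (\<forall>x y z. le x y \<and> le y z \<longrightarrow> le x z) \<and>
     (\<forall>x y. \<exists>s. le x s \<and> le y s \<and> (\<forall>u. le x u \<and> le y u \<longrightarrow> le s u)) \<and>
     (\<forall>x y. \<exists>i. le i x \<and> le i y \<and> (\<forall>u. le u x \<and> le u y \<longrightarrow> le u i))"

end

theory Submission
  imports Defs
begin

lemma star_le_refl: "star_le x (x::'a::lattice star)"
  by (cases x) auto

lemma star_le_antisym: "star_le x y \<Longrightarrow> star_le y x \<Longrightarrow> x = (y::'a::lattice star)"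
  by (cases x; cases y) auto

lemma star_le_trans: "star_le x y \<Longrightarrow> star_le y z \<Longrightarrow> star_le x (z::'a::lattice star)"
  by (cases x; cases y; cases z) auto

fun ssup :: "'a::lattice star \<Rightarrow> 'a star \<Rightarrow> 'a star" where
  "ssup SBot y = y" | "ssup x SBot = x" | "ssup STop _ = STop" | "ssup _ STop = STop"
| "ssup (Elem a) (Elem b) = Elem (sup a b)"
| "ssup (Elem a) (Tld b) = Tld b"
| "ssup (Tld a) (Elem b) = Tld a"
| "ssup (Tld a) (Tld b) = Tld (inf a b)"

fun sinf :: "'a::lattice star \<Rightarrow> 'a star \<Rightarrow> 'a star" where
  "sinf STop y = y" | "sinf x STop = x" | "sinf SBot _ = SBot" | "sinf _ SBot = SBot"
| "sinf (Elem a) (Elem b) = Elem (inf a b)"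
| "sinf (Elem a) (Tld b) = Elem a"
| "sinf (Tld a) (Elem b) = Elem b"
| "sinf (Tld a) (Tld b) = Tld (sup a b)"

lemma ssup_ok: "star_le x (ssup x y) \<and> star_le y (ssup x y) \<and>
   (star_le x u \<and> star_le y u \<longrightarrow> star_le (ssup x y) u)"
  by (cases x; cases y; cases u) auto

lemma sinf_ok: "star_le (sinf x y) x \<and> star_le (sinf x y) y \<and>
   (star_le u x \<and> star_le u y \<longrightarrow> star_le u (sinf x y))"
  by (cases x; cases y; cases u) auto

theorem mainTheorem13:
  fixes mult ldiv rdiv :: "'a::lattice \<Rightarrow> 'a \<Rightarrow> 'a" and one :: 'a
  assumes "rlu_groupoid mult ldiv rdiv one"
  shows "(is_lattice_order (star_le :: 'a star \<Rightarrow> 'a star \<Rightarrow> bool) \<and>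
          (\<forall>x. star_mult mult ldiv rdiv (star_one one) x = x \<and>
               star_mult mult ldiv rdiv x (star_one one) = x) \<and>
          (\<forall>x y z. star_le x y \<longrightarrow>
               star_le (star_mult mult ldiv rdiv x z) (star_mult mult ldiv rdiv y z) \<and>
               star_le (star_mult mult ldiv rdiv z x) (star_mult mult ldiv rdiv z y)))
       \<and> (\<forall>x y z.
            (star_le (star_mult mult ldiv rdiv x y) z \<longleftrightarrow>
             star_le (star_mult mult ldiv rdiv (star_neg z) x) (star_neg y)) \<and>
            (star_le (star_mult mult ldiv rdiv (star_neg z) x) (star_neg y) \<longleftrightarrow>
             star_le (star_mult mult ldiv rdiv y (star_neg z)) (star_neg x)))"
proof -
  have u1: "\<And>x. mult one x = x" and u2: "\<And>x. mult x one = x"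
    and rl: "\<And>x y z. mult x y \<le> z \<longleftrightarrow> y \<le> ldiv x z"
    and rr: "\<And>x y z. mult x y \<le> z \<longleftrightarrow> x \<le> rdiv z y"
    using assms unfolding rlu_groupoid_def by auto
  have lr: "\<And>a b c. a \<le> ldiv b c \<longleftrightarrow> b \<le> rdiv c a"
    using rl rr by blast
  have ldu: "\<And>x. ldiv one x = x"
    by (metis rl u1 order_antisym order_refl)
  have rdu: "\<And>x. rdiv x one = x"
    by (metis rr u2 order_antisym order_refl)
  have ml: "\<And>a b c. a \<le> b \<Longrightarrow> mult a c \<le> mult b c"
    by (metis rr order_refl order_trans)
  have mr: "\<And>a b c. a \<le> b \<Longrightarrow> mult c a \<le> mult c b"
    by (metis rl order_refl order_trans)
  have lm: "\<And>a b c. a \<le> b \<Longrightarrow> ldiv c a \<le> ldiv c b"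
    by (metis rl order_refl order_trans)
  have la: "\<And>a b c. a \<le> b \<Longrightarrow> ldiv b c \<le> ldiv a c"
    by (metis rl ml order_refl order_trans)
  have rm: "\<And>a b c. a \<le> b \<Longrightarrow> rdiv a c \<le> rdiv b c"
    by (metis rr order_refl order_trans)
  have ra: "\<And>a b c. a \<le> b \<Longrightarrow> rdiv c b \<le> rdiv c a"
    by (metis rr mr order_refl order_trans)
  have L: "is_lattice_order (star_le :: 'a star \<Rightarrow> 'a star \<Rightarrow> bool)"
    unfolding is_lattice_order_def
    apply (intro conjI allI impI)
    using star_le_refl apply blast
    using star_le_antisym apply blast
    using star_le_trans apply blast
    using ssup_ok apply blast
    using sinf_ok apply blast
    done
  have U: "\<forall>x. star_mult mult ldiv rdiv (star_one one) x = x \<and>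
               star_mult mult ldiv rdiv x (star_one one) = x"
  proof
    fix x show "star_mult mult ldiv rdiv (star_one one) x = x \<and>
               star_mult mult ldiv rdiv x (star_one one) = x"
      by (cases x) (auto simp: star_one_def u1 u2 ldu rdu)
  qed
  have M: "\<forall>x y z. star_le x y \<longrightarrow>
               star_le (star_mult mult ldiv rdiv x z) (star_mult mult ldiv rdiv y z) \<and>
               star_le (star_mult mult ldiv rdiv z x) (star_mult mult ldiv rdiv z y)"
  proof (intro allI impI)
    fix x y z :: "'a star" assume "star_le x y"
    then show "star_le (star_mult mult ldiv rdiv x z) (star_mult mult ldiv rdiv y z) \<and>
               star_le (star_mult mult ldiv rdiv z x) (star_mult mult ldiv rdiv z y)"
      by (cases x; cases y; cases z) (auto simp: ml mr lm la rm ra)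
  qed
  have R: "\<forall>x y z.
            (star_le (star_mult mult ldiv rdiv x y) z \<longleftrightarrow>
             star_le (star_mult mult ldiv rdiv (star_neg z) x) (star_neg y)) \<and>
            (star_le (star_mult mult ldiv rdiv (star_neg z) x) (star_neg y) \<longleftrightarrow>
             star_le (star_mult mult ldiv rdiv y (star_neg z)) (star_neg x))"
  proof (intro allI)
    fix x y z :: "'a star"
    show "(star_le (star_mult mult ldiv rdiv x y) z \<longleftrightarrow>
             star_le (star_mult mult ldiv rdiv (star_neg z) x) (star_neg y)) \<and>
            (star_le (star_mult mult ldiv rdiv (star_neg z) x) (star_neg y) \<longleftrightarrow>
             star_le (star_mult mult ldiv rdiv y (star_neg z)) (star_neg x))"
      by (cases x; cases y; cases z) (auto simp: rl lr)
  qed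
  show ?thesis using L U M R by blast
qed

end
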